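(* Let $\mathcal{A}=\{\mathbf{A},\mathbf{B},\mathbf{C},\mathbf{D}\}$, let $n\ge 1$, and let $H$ be an arbitrary (simple) graph on the vertex set $\{1,\dots,n\}$. (a) Let $\mathcal{R}\subseteq\mathcal{A}\times\mathcal{A}$ be any relation satisfying: (i) $(x,y)\in\mathcal{R}\iff(y,x)\in\mathcal{R}$; (ii) $(x,y)\in\mathcal{R}\Rightarrow x\neq y$; (iii) for all $x\neq z$, if $(x,y)\in\mathcal{R}$ and $(y,z)\in\mathcal{R}$ then $(x,z)\notin\mathcal{R}$. Then every shape (with respect to $H$ and $\mathcal{R}$) is a bipartite graph. (b) Let $\mathcal{R}^\dagger$ be the symmetric relation whose related pairs are exactly $\{\mathbf{A},\mathbf{B}\}$, $\{\mathbf{B},\mathbf{D}\}$, $\{\mathbf{D},\mathbf{C}\}$ (i.e. $(x,y)\in\mathcal{R}^\dagger$ iff $\{x,y\}$ is one of these three sets). For every subset $M\subseteq\{1,\dots,n\}$ such that the graph $H'$ on $\{1,\dots,n\}$ with edge set $E_{H'}=\{\{i,j\}\in E_H: i,j\in M\}$ is bipartite, the graph $H'$ is a shape with respect to $H$ and $\mathcal{R}^\dagger$. (c) Let $\mathcal{H}$ be the following base graph on $\{1,\dots,n\}$: if $n$ is even, $\mathcal{H}$ has edges $\{\sigma(i),\sigma(i+1)\}$, $i=1,\dots,n$ (indices modulo $n$), for some permutation $\sigma$ of $\{1,\dots,n\}$ (a Hamiltonian cycle); if $n$ is odd, fix a vertex $u$ and a bijection $\sigma$ from $\{1,\dots,n-1\}$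 onto $\{1,\dots,n\}\setminus\{u\}$, and let $\mathcal{H}$ have edges $\{\sigma(i),\sigma(i+1)\}$, $i=1,\dots,n-1$ (indices modulo $n-1$), with $u$ isolated. Then every spanning subgraph $H'$ of $\mathcal{H}$ (vertex set $\{1,\dots,n\}$, edge set any subset of $E_{\mathcal{H}}$) is a shape with respect to $\mathcal{H}$ and $\mathcal{R}^\dagger$.
   Context: Sequences are elements $v=(x_1,\dots,x_n)\in\mathcal{A}^n$; the set $\mathcal{A}^n$ is viewed as the graph $Q_4^n$ in which two sequences are adjacent iff they differ in exactly one coordinate. Given a base graph $H$ on $\{1,\dots,n\}$ and a relation $\mathcal{R}\subseteq\mathcal{A}\times\mathcal{A}$, the shape of a sequence $v=(x_1,\dots,x_n)$ is the graph $H_{\mathcal{R}}(v)$ with vertex set $\{1,\dots,n\}$ and edge set $\{\{i,k\}\in E_H : (x_i,x_k)\in\mathcal{R}\}$. A graph $S$ on $\{1,\dots,n\}$ is called a shape (with respect to $H,\mathcal{R}$) if $S=H_{\mathcal{R}}(v)$ for some sequence $v\in\mathcal{A}^n$. *)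

theory Defs
  imports Main
begin

datatype letter = LA | LB | LC | LD

text \<open>A graph on the vertex set {1..n} is represented by its edge set,
  a set of 2-element subsets of {1..n}.\<close>
definition simple_graph :: "nat \<Rightarrow> nat set set \<Rightarrow> bool" where
  "simple_graph n E \<longleftrightarrow>
     (\<forall>e\<in>E. \<exists>i j. i \<in> {1..n} \<and> j \<in> {1..n} \<and> i \<noteq> j \<and> e = {i, j})"

definition bipartite :: "nat \<Rightarrow> nat set set \<Rightarrow> bool" where
  "bipartite n E \<longleftrightarrow>
     (\<exists>X. X \<subseteq> {1..n} \<and> (\<forall>e\<in>E. \<exists>i j. e = {i, j} \<and> i \<in> X \<and> j \<notin> X))"

definition shape :: "nat set set \<Rightarrow> (letter \<times> letter) set \<Rightarrow> (nat \<Rightarrow> letter) \<Rightarrow> nat set set" where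
  "shape H R v = {e \<in> H. \<exists>i k. e = {i, k} \<and> (v i, v k) \<in> R}"

definition is_shape :: "nat set set \<Rightarrow> (letter \<times> letter) set \<Rightarrow> nat set set \<Rightarrow> bool" where
  "is_shape H R S \<longleftrightarrow> (\<exists>v. S = shape H R v)"

definition Rdag :: "(letter \<times> letter) set" where
  "Rdag = {(LA, LB), (LB, LA), (LB, LD), (LD, LB), (LD, LC), (LC, LD)}"

definition induced_edges :: "nat set set \<Rightarrow> nat set \<Rightarrow> nat set set" where
  "induced_edges H M = {e \<in> H. e \<subseteq> M}"

definition special_base :: "nat \<Rightarrow> nat set set \<Rightarrow> bool" where
  "special_base n HH \<longleftrightarrow>
     (even n \<and> (\<exists>\<sigma>. bij_betw \<sigma> {1..n} {1..n} \<and>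
        HH = {{\<sigma> i, \<sigma> (i mod n + 1)} | i. i \<in> {1..n}}))
   \<or> (odd n \<and> (\<exists>u \<sigma>. u \<in> {1..n} \<and> bij_betw \<sigma> {1..n-1} ({1..n} - {u}) \<and>
        HH = {{\<sigma> i, \<sigma> (i mod (n-1) + 1)} | i. i \<in> {1..n-1}}))"

end

theory Submission
  imports Defs
begin


definition cnt :: "(nat \<Rightarrow> bool) \<Rightarrow> nat \<Rightarrow> nat" where
  "cnt b i = card {j. j < i \<and> b j}"

lemma cnt_0[simp]: "cnt b 0 = 0" by (simp add: cnt_def)
lemma cnt_Suc: "cnt b (Suc i) = cnt b i + (if b i then 1 else 0)"
proof -
  have "{j. j < Suc i \<and> b j} = {j. j < i \<and> b j} \<union> (if b i then {i} else {})"
    by (auto simp: less_Suc_eq)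
  moreover have "finite {j. j < i \<and> b j}" by simp
  ultimately show ?thesis unfolding cnt_def by (auto)
qed

lemma Rdag_AB: "(x,y) \<in> Rdag \<longleftrightarrow> (y,x) \<in> Rdag" by (auto simp: Rdag_def)

lemma L1:
  assumes "even (cnt b m)"
  shows "\<exists>f. \<forall>j<m. ((f j, f ((j+1) mod m)) \<in> Rdag \<longleftrightarrow> b j)"
proof -
  define f where "f i = (if even (cnt b i) then LA else LB)" for i
  have "\<forall>j<m. ((f j, f ((j+1) mod m)) \<in> Rdag \<longleftrightarrow> b j)"
  proof (intro allI impI)
    fix j assume j: "j < m"
    show "((f j, f ((j+1) mod m)) \<in> Rdag \<longleftrightarrow> b j)"
    proof (cases "j + 1 < m")
      case True
      then show ?thesis by (auto simp: f_def cnt_Suc Rdag_def)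
    next
      case False
      then have m: "m = Suc j" using j by simp
      have "(j+1) mod m = 0" using m by simp
      then show ?thesis using assms m by (auto simp: f_def cnt_Suc Rdag_def split: if_splits)
    qed
  qed
  then show ?thesis by blast
qed

lemma L0:
  assumes "odd (cnt b m)" "b 0" "\<not> b (m-1)" "m \<ge> 3"
  shows "\<exists>f. \<forall>j<m. ((f j, f ((j+1) mod m)) \<in> Rdag \<longleftrightarrow> b j)"
proof -
  define f where "f i = (if i = 0 then LC else if i = 1 then LD else if odd (cnt b i) then LA else LB)" for i
  have c1: "cnt b 1 = 1" using assms(2) by (simp add: cnt_Suc[of b 0, simplified])
  have "\<forall>j<m. ((f j, f ((j+1) mod m)) \<in> Rdag \<longleftrightarrow> b j)"
  proof (intro allI impI)
    fix j assume j: "j < m"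
    show "((f j, f ((j+1) mod m)) \<in> Rdag \<longleftrightarrow> b j)"
    proof (cases "j + 1 < m")
      case True
      show ?thesis
      proof (cases "j = 0")
        case True then show ?thesis using assms \<open>j+1<m\<close> by (auto simp: f_def Rdag_def)
      next
        case False
        show ?thesis
        proof (cases "j = 1")
          case True then show ?thesis using \<open>j+1<m\<close> c1 by (auto simp: f_def Rdag_def cnt_Suc)
        next
          case False
          then show ?thesis using \<open>j \<noteq> 0\<close> \<open>j+1<m\<close> by (auto simp: f_def Rdag_def cnt_Suc)
        qed
      qed
    next
      case False
      then have m: "m = Suc j" using j by simp
      have "(j+1) mod m = 0" using m by simp
      moreover have "\<not> b j" using assms(3) m by simp
      moreover have "odd (cnt b j)" using assms(1) m \<open>\<not> b j\<close> by (simp add: cnt_Suc)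
      moreover have "j \<ge> 2" using m assms(4) by simp
      ultimately show ?thesis by (auto simp: f_def Rdag_def)
    qed
  qed
  then show ?thesis by blast
qed


lemma cnt_card: "cnt b m = card {j\<in>{..<m}. b j}"
  unfolding cnt_def by (rule arg_cong[where f=card]) auto

lemma exists_trans:
  fixes m :: nat
  assumes "j0 < m" "\<not> b j0" "j1 < m" "b j1"
  shows "\<exists>k<m. \<not> b k \<and> b ((k+1) mod m)"
proof (rule ccontr)
  assume H: "\<not> ?thesis"
  have m: "m > 0" using assms by simp
  have "\<And>t. \<not> b ((j0 + t) mod m)"
  proof -
    fix t show "\<not> b ((j0 + t) mod m)"
    proof (induction t)
      case 0 then show ?case using assms by simp
    next
      case (Suc t)
      have "(j0+t) mod m < m" using m by simp
      then have "\<not> b (((j0+t) mod m + 1) mod m)" using H Suc by blast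
      moreover have "((j0+t) mod m + 1) mod m = (j0 + Suc t) mod m" by (simp add: mod_Suc_eq)
      ultimately show ?case by simp
    qed
  qed
  from this[of "j1 + m - j0"] have "\<not> b ((j0 + (j1 + m - j0)) mod m)" .
  moreover have "(j0 + (j1 + m - j0)) mod m = j1" using assms by simp
  ultimately show False using assms by simp
qed

lemma rot:
  fixes m k :: nat
  assumes k: "k < m"
    and f': "\<forall>j<m. ((f' j, f' ((j+1) mod m)) \<in> Rdag \<longleftrightarrow> b ((j + (k+1)) mod m))"
  shows "\<exists>f. \<forall>j<m. ((f j, f ((j+1) mod m)) \<in> Rdag \<longleftrightarrow> b j)"
proof -
  define s where "s = k + 1"
  have s: "s \<le> m" "0 < m" using k s_def by auto
  define f where "f i = f' ((i + (m - s)) mod m)" for i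
  have "\<forall>j<m. ((f j, f ((j+1) mod m)) \<in> Rdag \<longleftrightarrow> b j)"
  proof (intro allI impI)
    fix j assume j: "j < m"
    define j' where "j' = (j + (m - s)) mod m"
    have j'm: "j' < m" using s j'_def by simp
    have e1: "(j' + s) mod m = j"
    proof -
      have "(j' + s) mod m = (j + (m - s) + s) mod m" unfolding j'_def by (simp only: mod_add_left_eq)
      also have "j + (m - s) + s = j + m" using s by simp
      finally show ?thesis using j by simp
    qed
    have e2: "((j+1) mod m + (m - s)) mod m = (j' + 1) mod m"
      unfolding j'_def
    proof -
      have "((j+1) mod m + (m - s)) mod m = (j + 1 + (m - s)) mod m" by (simp only: mod_add_left_eq)
      also have "j + 1 + (m - s) = (j + (m - s)) + 1" by simp
      also have "((j + (m - s)) + 1) mod m = ((j + (m - s)) mod m + 1) mod m" by (simp only: mod_add_left_eq)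
      finally show "((j+1) mod m + (m - s)) mod m = ((j + (m - s)) mod m + 1) mod m" .
    qed
    have "(f j, f ((j+1) mod m)) = (f' j', f' ((j'+1) mod m))"
      unfolding f_def j'_def using e2 j'_def by simp
    moreover have "b ((j' + s) mod m) = b j" using e1 by simp
    ultimately show "((f j, f ((j+1) mod m)) \<in> Rdag \<longleftrightarrow> b j)"
      using f' j'm s_def by auto
  qed
  then show ?thesis by blast
qed

lemma combi:
  fixes m :: nat and b :: "nat \<Rightarrow> bool"
  assumes "even m" "m = 2 \<longrightarrow> b 0 = b 1"
  shows "\<exists>f. \<forall>j<m. ((f j, f ((j+1) mod m)) \<in> Rdag \<longleftrightarrow> b j)"
proof (cases "even (cnt b m)")
  case True then show ?thesis by (rule L1)
next
  case False
  have m0: "m \<noteq> 0"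
  proof
    assume "m = 0" then have "cnt b m = 0" by simp
    then show False using False by simp
  qed
  have m2: "m \<noteq> 2"
  proof
    assume "m = 2"
    then have "b 0 = b 1" using assms by simp
    have u: "{..<m} = {0,1::nat}" using \<open>m = 2\<close> by auto
    have "{j\<in>{..<m}. b j} = {j\<in>{0,1}. b j}" using u by simp
    also have "\<dots> = (if b 0 then {0,1} else {})"
      using \<open>b 0 = b 1\<close> by (cases "b 0") (auto simp: set_eq_iff; metis gr0I)+
    finally have "{j\<in>{..<m}. b j} = (if b 0 then {0,1} else {})" .
    then show False using False by (simp add: cnt_card split: if_splits)
  qed
  have m3: "m \<ge> 3" using m0 m2 assms(1) by presburger
  have ex_out: "\<exists>j<m. \<not> b j"
  proof (rule ccontr)
    assume "\<not> ?thesis"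
    then have "{j\<in>{..<m}. b j} = {..<m}" by auto
    then show False using False assms(1) by (simp add: cnt_card)
  qed
  have ex_in: "\<exists>j<m. b j"
  proof (rule ccontr)
    assume "\<not> ?thesis"
    then have "{j\<in>{..<m}. b j} = {}" by auto
    then have "cnt b m = 0" unfolding cnt_card by (metis card.empty)
    then show False using False by simp
  qed
  obtain k where k: "k < m" "\<not> b k" "b ((k+1) mod m)"
    using exists_trans ex_out ex_in by blast
  define b' where "b' j = b ((j + (k+1)) mod m)" for j
  have inj: "inj_on (\<lambda>j. (j + (k+1)) mod m) {..<m}"
  proof (rule inj_onI)
    fix x y assume xy: "x \<in> {..<m}" "y \<in> {..<m}" "(x + (k+1)) mod m = (y + (k+1)) mod m"
    have km: "k + 1 \<le> m" using k by simp
    have r: "(z + (k+1)) mod m = (if z + (k+1) < m then z + (k+1) else z + (k+1) - m)" if "z < m" for z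
    proof (cases "z + (k+1) < m")
      case True then show ?thesis by simp
    next
      case False
      then have "z + (k+1) - m < m" using that km by linarith
      moreover have "(z + (k+1)) mod m = (z + (k+1) - m) mod m" using False by (simp add: le_mod_geq)
      ultimately show ?thesis using False by simp
    qed
    show "x = y" using r[of x] r[of y] xy by (auto split: if_splits)
  qed
  have img: "(\<lambda>j. (j + (k+1)) mod m) ` {j\<in>{..<m}. b' j} = {j\<in>{..<m}. b j}"
  proof
    show "(\<lambda>j. (j + (k+1)) mod m) ` {j\<in>{..<m}. b' j} \<subseteq> {j\<in>{..<m}. b j}"
      using m0 by (auto simp: b'_def)
  next
    show "{j\<in>{..<m}. b j} \<subseteq> (\<lambda>j. (j + (k+1)) mod m) ` {j\<in>{..<m}. b' j}"
    proof
      fix x assume x: "x \<in> {j\<in>{..<m}. b j}"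
      define y where "y = (x + (m - (k+1))) mod m"
      have "(y + (k+1)) mod m = (x + (m - (k+1)) + (k+1)) mod m"
        unfolding y_def by (simp only: mod_add_left_eq)
      also have "x + (m - (k+1)) + (k+1) = x + m" using k by simp
      finally have "(y + (k+1)) mod m = x" using x by simp
      then show "x \<in> (\<lambda>j. (j + (k+1)) mod m) ` {j\<in>{..<m}. b' j}"
        using x m0 by (auto simp: b'_def y_def intro!: image_eqI[where x=y])
    qed
  qed
  have "card {j\<in>{..<m}. b' j} = card {j\<in>{..<m}. b j}"
  proof -
    have "card ((\<lambda>j. (j + (k+1)) mod m) ` {j\<in>{..<m}. b' j}) = card {j\<in>{..<m}. b' j}"
      by (rule card_image[OF inj_on_subset[OF inj]]) auto
    then show ?thesis using img by simp
  qed
  then have odd': "odd (cnt b' m)" using False by (simp add: cnt_card)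
  have b0: "b' 0" using k by (simp add: b'_def)
  have bm: "\<not> b' (m-1)"
  proof -
    have "m - 1 + (k+1) = k + m" using m0 by simp
    then have "(m - 1 + (k+1)) mod m = k" using k by simp
    then show ?thesis using k by (simp add: b'_def)
  qed
  obtain f' where "\<forall>j<m. ((f' j, f' ((j+1) mod m)) \<in> Rdag \<longleftrightarrow> b' j)"
    using L0[OF odd' b0 bm m3] by blast
  then have "\<forall>j<m. ((f' j, f' ((j+1) mod m)) \<in> Rdag \<longleftrightarrow> b ((j + (k+1)) mod m))"
    unfolding b'_def .
  then show ?thesis by (rule rot[OF \<open>k < m\<close>])
qed


lemma cyc_shape:
  fixes m :: nat and \<tau> :: "nat \<Rightarrow> nat"
  assumes ev: "even m" and inj: "inj_on \<tau> {..<m}"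
    and HH: "HH = {{\<tau> j, \<tau> ((j+1) mod m)} | j. j < m}" and E: "E' \<subseteq> HH"
  shows "is_shape HH Rdag E'"
proof -
  define b where "b j = ({\<tau> j, \<tau> ((j+1) mod m)} \<in> E')" for j
  have m2: "m = 2 \<longrightarrow> b 0 = b 1"
    by (auto simp: b_def insert_commute)
  obtain f where f: "\<forall>j<m. ((f j, f ((j+1) mod m)) \<in> Rdag \<longleftrightarrow> b j)"
    using combi[OF ev m2] by blast
  define v where "v x = f (the_inv_into {..<m} \<tau> x)" for x
  have vt: "v (\<tau> j) = f j" if "j < m" for j
    unfolding v_def using the_inv_into_f_f[OF inj] that by simp
  have "E' = shape HH Rdag v"
  proof
    show "E' \<subseteq> shape HH Rdag v"
    proof
      fix e assume e: "e \<in> E'"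
      then have "e \<in> HH" using E by blast
      then obtain j where j: "j < m" "e = {\<tau> j, \<tau> ((j+1) mod m)}" using HH by blast
      then have jm: "(j+1) mod m < m" by simp
      have "b j" using e j by (simp add: b_def)
      then have "(v (\<tau> j), v (\<tau> ((j+1) mod m))) \<in> Rdag" using f j jm vt by simp
      then show "e \<in> shape HH Rdag v" unfolding shape_def using \<open>e \<in> HH\<close> j by blast
    qed
  next
    show "shape HH Rdag v \<subseteq> E'"
    proof
      fix e assume e: "e \<in> shape HH Rdag v"
      then obtain i k where ik: "e \<in> HH" "e = {i, k}" "(v i, v k) \<in> Rdag" unfolding shape_def by blast
      then obtain j where j: "j < m" "e = {\<tau> j, \<tau> ((j+1) mod m)}" using HH by blast
      then have jm: "(j+1) mod m < m" by simp
      have "(i = \<tau> j \<and> k = \<tau> ((j+1) mod m)) \<or> (i = \<tau> ((j+1) mod m) \<and> k = \<tau> j)"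
        using ik(2) j(2) by (auto simp: doubleton_eq_iff)
      then have "(f j, f ((j+1) mod m)) \<in> Rdag"
        using ik(3) vt[OF j(1)] vt[OF jm] Rdag_AB by auto
      then have "b j" using f j by blast
      then show "e \<in> E'" using j by (simp add: b_def)
    qed
  qed
  then show ?thesis unfolding is_shape_def by blast
qed

lemma cyc_shape1:
  fixes m :: nat and \<sigma> :: "nat \<Rightarrow> nat"
  assumes ev: "even m" and inj: "inj_on \<sigma> {1..m}"
    and HH: "HH = {{\<sigma> i, \<sigma> (i mod m + 1)} | i. i \<in> {1..m}}" and E: "E' \<subseteq> HH"
  shows "is_shape HH Rdag E'"
proof (rule cyc_shape[OF ev _ _ E])
  show "inj_on (\<lambda>j. \<sigma> (j+1)) {..<m}"
  proof (rule inj_onI)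
    fix x y assume xy: "x \<in> {..<m}" "y \<in> {..<m}" "\<sigma> (x+1) = \<sigma> (y+1)"
    have "x + 1 \<in> {1..m}" "y + 1 \<in> {1..m}" using xy by auto
    then have "x + 1 = y + 1" using inj_onD[OF inj xy(3)] by blast
    then show "x = y" by simp
  qed
  show "HH = {{(\<lambda>j. \<sigma> (j+1)) j, (\<lambda>j. \<sigma> (j+1)) ((j+1) mod m)} | j. j < m}"
    unfolding HH
  proof (intro set_eqI iffI)
    fix e assume "e \<in> {{\<sigma> i, \<sigma> (i mod m + 1)} | i. i \<in> {1..m}}"
    then obtain i where i: "i \<in> {1..m}" "e = {\<sigma> i, \<sigma> (i mod m + 1)}" by blast
    then have "e = {\<sigma> ((i-1)+1), \<sigma> (((i-1)+1) mod m + 1)}" "i - 1 < m" by auto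
    then show "e \<in> {{(\<lambda>j. \<sigma> (j+1)) j, (\<lambda>j. \<sigma> (j+1)) ((j+1) mod m)} | j. j < m}" by blast
  next
    fix e assume "e \<in> {{(\<lambda>j. \<sigma> (j+1)) j, (\<lambda>j. \<sigma> (j+1)) ((j+1) mod m)} | j. j < m}"
    then obtain j where j: "j < m" "e = {\<sigma> (j+1), \<sigma> ((j+1) mod m + 1)}" by auto
    then have "j + 1 \<in> {1..m}" by auto
    then show "e \<in> {{\<sigma> i, \<sigma> (i mod m + 1)} | i. i \<in> {1..m}}" using j by blast
  qed
qed

lemma all_letter: "(\<forall>x::letter. P x) \<longleftrightarrow> P LA \<and> P LB \<and> P LC \<and> P LD"
  by (metis letter.exhaust)

lemma bip_letters:
  fixes R :: "(letter \<times> letter) set"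
  assumes sy: "\<forall>x y. (x, y) \<in> R \<longleftrightarrow> (y, x) \<in> R"
    and ir: "\<forall>x y. (x, y) \<in> R \<longrightarrow> x \<noteq> y"
    and tr: "\<forall>x y z. x \<noteq> z \<and> (x, y) \<in> R \<and> (y, z) \<in> R \<longrightarrow> (x, z) \<notin> R"
  shows "\<exists>P. \<forall>x y. (x, y) \<in> R \<longrightarrow> (x \<in> P \<longleftrightarrow> y \<notin> P)"
proof -
  have s: "(LB,LA)\<in>R \<longleftrightarrow> (LA,LB)\<in>R" "(LC,LA)\<in>R \<longleftrightarrow> (LA,LC)\<in>R" "(LD,LA)\<in>R \<longleftrightarrow> (LA,LD)\<in>R"
    "(LC,LB)\<in>R \<longleftrightarrow> (LB,LC)\<in>R" "(LD,LB)\<in>R \<longleftrightarrow> (LB,LD)\<in>R" "(LD,LC)\<in>R \<longleftrightarrow> (LC,LD)\<in>R"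
    using sy by blast+
  have i: "(LA,LA)\<notin>R" "(LB,LB)\<notin>R" "(LC,LC)\<notin>R" "(LD,LD)\<notin>R" using ir by blast+
  have t: "\<not> ((LA,LB)\<in>R \<and> (LB,LC)\<in>R \<and> (LA,LC)\<in>R)"
    "\<not> ((LA,LB)\<in>R \<and> (LB,LD)\<in>R \<and> (LA,LD)\<in>R)"
    "\<not> ((LA,LC)\<in>R \<and> (LC,LD)\<in>R \<and> (LA,LD)\<in>R)"
    "\<not> ((LB,LC)\<in>R \<and> (LC,LD)\<in>R \<and> (LB,LD)\<in>R)"
    using tr by blast+
  define f where "f a b c d = {z. case z of LA \<Rightarrow> a | LB \<Rightarrow> b | LC \<Rightarrow> c | LD \<Rightarrow> d}" for a b c d :: bool
  have "\<exists>a b c d. \<forall>x y. (x, y) \<in> R \<longrightarrow> (x \<in> f a b c d \<longleftrightarrow> y \<notin> f a b c d)"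
    unfolding all_letter f_def
    apply (simp only: s i mem_Collect_eq letter.case simp_thms)
    apply (unfold ex_bool_eq)
    apply (cases "(LA,LB)\<in>R"; cases "(LA,LC)\<in>R"; cases "(LA,LD)\<in>R"; cases "(LB,LC)\<in>R"; cases "(LB,LD)\<in>R"; cases "(LC,LD)\<in>R")
    using t by simp_all
  then show ?thesis by blast
qed

theorem lemma1:
  fixes n :: nat and H :: "nat set set"
  assumes "n \<ge> 1" and "simple_graph n H"
  shows "(\<forall>R :: (letter \<times> letter) set.
            (\<forall>x y. (x, y) \<in> R \<longleftrightarrow> (y, x) \<in> R) \<and>
            (\<forall>x y. (x, y) \<in> R \<longrightarrow> x \<noteq> y) \<and>
            (\<forall>x y z. x \<noteq> z \<and> (x, y) \<in> R \<and> (y, z) \<in> R \<longrightarrow> (x, z) \<notin> R)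
            \<longrightarrow> (\<forall>S. is_shape H R S \<longrightarrow> bipartite n S))
       \<and> (\<forall>M. M \<subseteq> {1..n} \<and> bipartite n (induced_edges H M)
              \<longrightarrow> is_shape H Rdag (induced_edges H M))
       \<and> (\<forall>HH. special_base n HH \<longrightarrow> (\<forall>E'. E' \<subseteq> HH \<longrightarrow> is_shape HH Rdag E'))"
proof (intro conjI allI impI)
  fix R :: "(letter \<times> letter) set" and S
  assume R: "(\<forall>x y. (x, y) \<in> R \<longleftrightarrow> (y, x) \<in> R) \<and>
            (\<forall>x y. (x, y) \<in> R \<longrightarrow> x \<noteq> y) \<and>
            (\<forall>x y z. x \<noteq> z \<and> (x, y) \<in> R \<and> (y, z) \<in> R \<longrightarrow> (x, z) \<notin> R)"
    and S: "is_shape H R S"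
  obtain P where P: "\<forall>x y. (x, y) \<in> R \<longrightarrow> (x \<in> P \<longleftrightarrow> y \<notin> P)"
    using bip_letters[OF conjunct1[OF R] conjunct1[OF conjunct2[OF R]] conjunct2[OF conjunct2[OF R]]] by (elim exE) blast
  obtain v where v: "S = shape H R v" using S unfolding is_shape_def by blast
  define X where "X = {i \<in> {1..n}. v i \<in> P}"
  have "\<forall>e\<in>S. \<exists>i j. e = {i, j} \<and> i \<in> X \<and> j \<notin> X"
  proof
    fix e assume e: "e \<in> S"
    then obtain i k where ik: "e \<in> H" "e = {i, k}" "(v i, v k) \<in> R" using v unfolding shape_def by blast
    obtain a c where ac: "a \<in> {1..n}" "c \<in> {1..n}" "e = {a, c}"
      using assms(2) ik(1) unfolding simple_graph_def by blast
    have rng: "i \<in> {1..n}" "k \<in> {1..n}" using ac ik(2) by (auto simp: doubleton_eq_iff)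
    show "\<exists>i j. e = {i, j} \<and> i \<in> X \<and> j \<notin> X"
    proof (cases "v i \<in> P")
      case True
      then have "v k \<notin> P" using P ik(3) by blast
      then show ?thesis using True rng ik(2) unfolding X_def by blast
    next
      case False
      then have "v k \<in> P" using P ik(3) by blast
      moreover have "e = {k, i}" using ik(2) by (simp add: insert_commute)
      ultimately show ?thesis using False rng unfolding X_def by blast
    qed
  qed
  then show "bipartite n S" unfolding bipartite_def X_def by (intro exI[of _ X]) (auto simp: X_def)
next
  fix M assume M: "M \<subseteq> {1..n} \<and> bipartite n (induced_edges H M)"
  then obtain X where X: "\<forall>e\<in>induced_edges H M. \<exists>i j. e = {i, j} \<and> i \<in> X \<and> j \<notin> X"
    unfolding bipartite_def by blast
  define v where "v i = (if i \<in> M then (if i \<in> X then LA else LB) else LC)" for i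
  have "induced_edges H M = shape H Rdag v"
  proof
    show "induced_edges H M \<subseteq> shape H Rdag v"
    proof
      fix e assume e: "e \<in> induced_edges H M"
      then obtain i j where ij: "e = {i, j}" "i \<in> X" "j \<notin> X" using X by blast
      have "e \<in> H" "e \<subseteq> M" using e unfolding induced_edges_def by auto
      then have "i \<in> M" "j \<in> M" using ij by auto
      then have "(v i, v j) \<in> Rdag" using ij by (simp add: v_def Rdag_def)
      then show "e \<in> shape H Rdag v" unfolding shape_def using \<open>e \<in> H\<close> ij by blast
    qed
  next
    show "shape H Rdag v \<subseteq> induced_edges H M"
    proof
      fix e assume "e \<in> shape H Rdag v"
      then obtain i k where ik: "e \<in> H" "e = {i, k}" "(v i, v k) \<in> Rdag" unfolding shape_def by blast
      have "i \<in> M" "k \<in> M" using ik(3) by (auto simp: v_def Rdag_def split: if_splits)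
      then show "e \<in> induced_edges H M" using ik unfolding induced_edges_def by auto
    qed
  qed
  then show "is_shape H Rdag (induced_edges H M)" unfolding is_shape_def by blast
next
  fix HH E' assume HH: "special_base n HH" and E': "E' \<subseteq> HH"
  show "is_shape HH Rdag E'"
  proof (cases "even n")
    case True
    have d: "\<exists>\<sigma>. bij_betw \<sigma> {1..n} {1..n} \<and> HH = {{\<sigma> i, \<sigma> (i mod n + 1)} | i. i \<in> {1..n}}"
      using HH True unfolding special_base_def by simp
    obtain \<sigma> where s1: "bij_betw \<sigma> {1..n} {1..n}" and s2: "HH = {{\<sigma> i, \<sigma> (i mod n + 1)} | i. i \<in> {1..n}}"
      using d by (elim exE conjE)
    show ?thesis by (rule cyc_shape1[OF True bij_betw_imp_inj_on[OF s1] s2 E'])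
  next
    case False
    have d: "\<exists>u \<sigma>. u \<in> {1..n} \<and> bij_betw \<sigma> {1..n-1} ({1..n} - {u}) \<and>
        HH = {{\<sigma> i, \<sigma> (i mod (n-1) + 1)} | i. i \<in> {1..n-1}}"
      using HH False unfolding special_base_def by simp
    obtain u \<sigma> where s0: "u \<in> {1..n}" and s1: "bij_betw \<sigma> {1..n-1} ({1..n} - {u})"
        and s2: "HH = {{\<sigma> i, \<sigma> (i mod (n-1) + 1)} | i. i \<in> {1..n-1}}"
      using d by (elim exE conjE)
    have ev: "even (n - 1)" using False assms(1) by simp
    show ?thesis by (rule cyc_shape1[OF ev bij_betw_imp_inj_on[OF s1] s2 E'])
  qed
qed

end
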